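(* Let $(r,\ell)$ be a $\mathcal C^1$ solution of system (D) on $[0,t_* )\times\mathbb R$. Then for all $t\in[0,t_* )$ and $\alpha,\beta\in\mathbb R$, $$c_1(t,\alpha)=\sqrt{\frac{k\big(r_0(\alpha)-\ell(t,x_1(t,\alpha))\big)}{k(2r_0(\alpha))}}\Big\{1+r_0'(\alpha)\sqrt{k(2r_0(\alpha))}\int_0^t f\big(r_0(\alpha)-\ell(\tau,x_1(\tau,\alpha))\big)\,d\tau\Big\},$$ $$c_2(t,\beta)=\sqrt{\frac{k\big(r(t,x_2(t,\beta))-\ell_0(\beta)\big)}{k(2r_0(\beta))}}\Big\{1+\ell_0'(\beta)\sqrt{k(2r_0(\beta))}\int_0^t f\big(r(\tau,x_2(\tau,\beta))-\ell_0(\beta)\big)\,d\tau\Big\}.$$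
   Context: Let $Q(\xi):=\sqrt{1+\xi^2}$, $L(u):=\tfrac12(u\sqrt{1+u^2}+\operatorname{arcsinh}u)$ (so $L'=Q$, $L$ an odd increasing bijection of $\mathbb R$), and $k(\eta):=Q(L^{-1}(-\eta/2))$, so $k$ is even, smooth, $k\ge k(0)=1$. Set $f(\eta):=k'(\eta)/\sqrt{k(\eta)}$. Given $w_0\in\mathcal C^2(\mathbb R)$ with $w_0'$ bounded and non-constant, let $r_0:=-L(w_0')$ and $\ell_0:=L(w_0')=-r_0$. System (D) is: $r_{,t}+k(r-\ell)r_{,x}=0$, $\ell_{,t}-k(r-\ell)\ell_{,x}=0$ on $[0,t_* )\times\mathbb R$, $r(0,\cdot)=r_0$, $\ell(0,\cdot)=\ell_0$, where $[0,t_* )$ is the maximal interval of existence of the $\mathcal C^1$ solution. Forward characteristics $x_1(t,\alpha)$ solve $\partial_t x_1=k\big((r-\ell)(t,x_1)\big)$, $x_1(0,\alpha)=\alpha$; backward characteristics $x_2(t,\beta)$ solve $\partial_tx_2=-k\big((r-\ell)(t,x_2)\big)$, $x_2(0,\beta)=\beta$. Along them $r(t,x_1(t,\alpha))=r_0(\alpha)$ and $\ell(t,x_2(t,\beta))=\ell_0(\beta)$. The infinitesimal compression ratios are $c_1(t,\alpha):=\partial x_1/\partial\alpha$ and $c_2(t,\beta):=\partial x_2/\partial\beta$. *)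

theory Defs
  imports "HOL-Analysis.Analysis" "HOL-Library.Extended_Real"
begin

definition Q_fun :: "real \<Rightarrow> real" where
  "Q_fun \<xi> = sqrt (1 + \<xi>\<^sup>2)"

definition L_fun :: "real \<Rightarrow> real" where
  "L_fun u = (u * sqrt (1 + u\<^sup>2) + arsinh u) / 2"

(* k(eta) = Q(L^{-1}(-eta/2)); L is a bijection of R, so inv L_fun is its inverse *)
definition k_fun :: "real \<Rightarrow> real" where
  "k_fun \<eta> = Q_fun (inv L_fun (- \<eta> / 2))"

definition f_fun :: "real \<Rightarrow> real" where
  "f_fun \<eta> = deriv k_fun \<eta> / sqrt (k_fun \<eta>)"

definition Dom :: "ereal \<Rightarrow> real set" where
  "Dom T = {s. 0 \<le> s \<and> ereal s < T}"

(* (r,l) is a C^1 solution of system (D) on [0,T) x R with initial data r0, l0.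
   C^1 is expressed by continuous partial derivatives giving the (Frechet) derivative. *)
definition solD :: "(real \<Rightarrow> real) \<Rightarrow> (real \<Rightarrow> real) \<Rightarrow> ereal
     \<Rightarrow> (real \<Rightarrow> real \<Rightarrow> real) \<Rightarrow> (real \<Rightarrow> real \<Rightarrow> real) \<Rightarrow> bool" where
  "solD r0 l0 T r l \<longleftrightarrow>
     (\<exists>rt rx lt lx.
        continuous_on (Dom T \<times> UNIV) rt \<and> continuous_on (Dom T \<times> UNIV) rx \<and>
        continuous_on (Dom T \<times> UNIV) lt \<and> continuous_on (Dom T \<times> UNIV) lx \<and>
        (\<forall>p \<in> Dom T \<times> UNIV.
           ((\<lambda>q. r (fst q) (snd q)) has_derivative (\<lambda>h. rt p * fst h + rx p * snd h))
              (at p within Dom T \<times> UNIV) \<and>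
           ((\<lambda>q. l (fst q) (snd q)) has_derivative (\<lambda>h. lt p * fst h + lx p * snd h))
              (at p within Dom T \<times> UNIV) \<and>
           rt p + k_fun (r (fst p) (snd p) - l (fst p) (snd p)) * rx p = 0 \<and>
           lt p - k_fun (r (fst p) (snd p) - l (fst p) (snd p)) * lx p = 0)) \<and>
     (\<forall>x. r 0 x = r0 x \<and> l 0 x = l0 x)"

end

theory Submission
  imports Defs
begin


lemma Q_pos: "Q_fun x \<ge> 1"
  unfolding Q_fun_def by simp

lemma sqrt1_deriv: "((\<lambda>x. sqrt (1 + x\<^sup>2)) has_real_derivative x / sqrt (1 + x\<^sup>2)) (at x)"
proof -
  have p: "0 < 1 + x\<^sup>2" by (simp add: add_pos_nonneg)
  have d: "((\<lambda>x. 1 + x\<^sup>2) has_real_derivative 2 * x) (at x)"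
    by (auto intro!: derivative_eq_intros)
  have "((\<lambda>x. sqrt (1 + x\<^sup>2)) has_real_derivative inverse (sqrt (1 + x\<^sup>2)) / 2 * (2 * x)) (at x)"
    by (rule DERIV_chain2[OF DERIV_real_sqrt[OF p] d])
  then show ?thesis by (simp add: field_simps)
qed

lemma L_deriv0: "(L_fun has_real_derivative sqrt (1 + u\<^sup>2)) (at u)"
proof -
  have p: "0 < 1 + u\<^sup>2" by (simp add: add_pos_nonneg)
  have d1: "((\<lambda>u. u * sqrt (1 + u\<^sup>2)) has_real_derivative (1 * sqrt (1 + u\<^sup>2) + u / sqrt (1 + u\<^sup>2) * u)) (at u)"
    by (rule DERIV_mult[OF DERIV_ident sqrt1_deriv])
  have d2: "((\<lambda>u. u * sqrt (1 + u\<^sup>2) + arsinh u) has_real_derivative (1 * sqrt (1 + u\<^sup>2) + u / sqrt (1 + u\<^sup>2) * u) + 1 / sqrt (u ^ 2 + 1)) (at u)"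
    by (rule DERIV_add[OF d1 arsinh_real_has_field_derivative])
  have d3: "(L_fun has_real_derivative ((1 * sqrt (1 + u\<^sup>2) + u / sqrt (1 + u\<^sup>2) * u) + 1 / sqrt (u ^ 2 + 1)) / 2) (at u)"
    unfolding L_fun_def[abs_def] by (rule DERIV_cdivide[OF d2])
  have s: "sqrt (1+u\<^sup>2) * sqrt (1+u\<^sup>2) = 1+u\<^sup>2" using p by (simp flip: power2_eq_square)
  have s2: "sqrt (u^2+1) = sqrt (1+u\<^sup>2)" by (simp add: add.commute)
  have s3: "sqrt (1+u\<^sup>2) > 0" using p by simp
  have e: "((1 * sqrt (1 + u\<^sup>2) + u / sqrt (1 + u\<^sup>2) * u) + 1 / sqrt (u ^ 2 + 1)) / 2 = sqrt (1 + u\<^sup>2)"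
    unfolding s2 using s s3 by (simp add: field_simps) (simp add: power2_eq_square)
  show ?thesis using d3 unfolding e .
qed

lemma L_deriv: "(L_fun has_real_derivative Q_fun u) (at u)"
  unfolding Q_fun_def by (rule L_deriv0)

lemma L_odd: "L_fun (-u) = - L_fun u"
  unfolding L_fun_def by (simp add: field_simps)

lemma L_ge: "u \<ge> 0 \<Longrightarrow> L_fun u \<ge> u / 2"
proof -
  assume u: "u \<ge> 0"
  have "u * sqrt (1 + u\<^sup>2) \<ge> u * 1" using u by (intro mult_left_mono) auto
  moreover have "arsinh u \<ge> 0" using u arsinh_real_neg_iff[of u] by linarith
  ultimately show ?thesis unfolding L_fun_def by simp
qed

lemma L_cont: "isCont L_fun x"
  using L_deriv DERIV_isCont by blast

lemma L_mono: "strict_mono L_fun"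
  by (rule strict_monoI, rule DERIV_pos_imp_increasing[of _ _ L_fun])
     (use L_deriv Q_pos in \<open>auto intro: order.strict_trans2[OF zero_less_one]\<close>)

lemma L_surj: "surj L_fun"
proof -
  { fix y :: real
    have a: "L_fun (- 2 * \<bar>y\<bar>) \<le> y" using L_ge[of "2*\<bar>y\<bar>"] L_odd[of "2*\<bar>y\<bar>"] by auto
    have b: "y \<le> L_fun (2 * \<bar>y\<bar>)" using L_ge[of "2*\<bar>y\<bar>"] by auto
    have "\<exists>x\<ge>- 2 * \<bar>y\<bar>. x \<le> 2 * \<bar>y\<bar> \<and> L_fun x = y"
      by (rule IVT[of L_fun, OF a b]) (auto intro: L_cont)
    then have "y \<in> range L_fun" by auto }
  then show ?thesis by auto
qed

definition g_fun where "g_fun = inv L_fun"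

lemma L_g: "L_fun (g_fun y) = y"
  unfolding g_fun_def using L_surj by (simp add: surj_f_inv_f)

lemma g_L: "g_fun (L_fun x) = x"
  unfolding g_fun_def using L_mono strict_mono_imp_inj_on inv_f_f by metis

lemma g_odd: "g_fun (-y) = - g_fun y"
  by (metis L_g L_odd g_L)

lemma g_cont: "isCont g_fun y"
proof -
  have "isCont g_fun (L_fun (g_fun y))"
    by (rule isCont_inverse_function[of 1]) (auto simp: g_L L_cont)
  then show ?thesis by (simp add: L_g)
qed

lemma g_deriv: "(g_fun has_real_derivative inverse (Q_fun (g_fun y))) (at y)"
  by (rule DERIV_inverse_function[where a="y-1" and b="y+1" and f=L_fun])
     (use L_deriv Q_pos[of "g_fun y"] g_cont L_g in \<open>auto\<close>)

definition kd where "kd \<eta> = - g_fun (-\<eta>/2) / (2 * (1 + (g_fun (-\<eta>/2))\<^sup>2))"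

lemma k_alt: "k_fun \<eta> = Q_fun (g_fun (-\<eta>/2))"
  unfolding k_fun_def g_fun_def by simp

lemma k_deriv: "(k_fun has_real_derivative kd \<eta>) (at \<eta>)"
proof -
  let ?v = "g_fun (-\<eta>/2)"
  have p: "1 + ?v\<^sup>2 > 0" by (simp add: add_pos_nonneg)
  have dg: "((\<lambda>e. g_fun (-e/2)) has_real_derivative inverse (Q_fun ?v) * (-1/2)) (at \<eta>)"
    by (rule DERIV_chain2[OF g_deriv]) (auto intro!: derivative_eq_intros)
  have d: "((\<lambda>e. sqrt (1 + (g_fun (-e/2))\<^sup>2)) has_real_derivative
         ?v / sqrt (1 + ?v\<^sup>2) * (inverse (Q_fun ?v) * (-1/2))) (at \<eta>)"
    by (rule DERIV_chain2[OF sqrt1_deriv dg])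
  have s: "sqrt (1+?v\<^sup>2) * sqrt (1+?v\<^sup>2) = 1+?v\<^sup>2" using p by (simp flip: power2_eq_square)
  have s3: "sqrt (1+?v\<^sup>2) > 0" using p by simp
  have e: "?v / sqrt (1 + ?v\<^sup>2) * (inverse (Q_fun ?v) * (-1/2)) = kd \<eta>"
    unfolding kd_def Q_fun_def using s s3 p
    by (simp add: field_simps)
  have kk: "k_fun = (\<lambda>e. sqrt (1 + (g_fun (-e/2))\<^sup>2))" by (rule ext) (simp add: k_alt Q_fun_def)
  show ?thesis using d unfolding e kk .
qed

lemma deriv_k: "deriv k_fun = kd"
  using k_deriv DERIV_imp_deriv by blast

lemma kd_cont: "continuous_on A kd"
proof -
  have "continuous_on A (\<lambda>e. g_fun (-e/2))"
    by (rule continuous_on_compose2[of UNIV g_fun]) (auto intro!: continuous_intros continuous_at_imp_continuous_on g_cont)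
  moreover have "\<And>x. 2 + 2 * (g_fun (- (x / 2)))\<^sup>2 \<noteq> 0"
    by (smt (verit) zero_le_power2)
  ultimately show ?thesis unfolding kd_def[abs_def]
    by (auto intro!: continuous_intros simp: add_pos_nonneg)
qed

lemma k_cont: "continuous_on A k_fun"
  by (meson DERIV_isCont continuous_at_imp_continuous_on k_deriv)

lemma k_ge1: "k_fun x \<ge> 1"
  unfolding k_alt using Q_pos by simp

lemma k_even: "k_fun (-x) = k_fun x"
  unfolding k_alt Q_fun_def by (simp add: g_odd)

lemma kd_odd: "kd (-x) = - kd x"
  unfolding kd_def by (simp add: g_odd)

lemma f_alt: "f_fun x = kd x / sqrt (k_fun x)"
  unfolding f_fun_def deriv_k ..

lemma f_odd: "f_fun (-x) = - f_fun x"
  unfolding f_alt by (simp add: k_even kd_odd)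

lemma f_cont: "continuous_on A f_fun"
  unfolding f_alt[abs_def]
  using k_ge1 by (auto intro!: continuous_intros kd_cont k_cont) (smt (verit) k_ge1)




lemma gronwall_sq:
  fixes E E' :: "real \<Rightarrow> real"
  assumes s1: "0 \<le> s1" and A: "0 \<le> A" and B: "0 \<le> B" and E0: "E 0 = 0"
    and dE: "\<And>s. s \<in> {0..s1} \<Longrightarrow> (E has_real_derivative E' s) (at s within {0..s1})"
    and bd: "\<And>s. s \<in> {0..s1} \<Longrightarrow> \<bar>E' s\<bar> \<le> A * \<bar>E s\<bar> + B"
    and s: "s \<in> {0..s1}"
  shows "\<bar>E s\<bar> \<le> exp ((2*A+1) * s1) * B"
proof -
  define c where "c = 2*A+1"
  have c: "c \<ge> 1" using A by (simp add: c_def)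
  define v where "v x = exp (- c * x) * ((E x)\<^sup>2 + B\<^sup>2 / c)" for x
  define v' where "v' x = exp (- c * x) * (2 * E x * E' x - c * (E x)\<^sup>2 - B\<^sup>2)" for x
  have dv: "(v has_real_derivative v' x) (at x within {0..s})" if x: "x \<in> {0..s}" for x
  proof -
    have xx: "x \<in> {0..s1}" using x s by auto
    have dE': "(E has_real_derivative E' x) (at x within {0..s})"
      by (rule has_field_derivative_subset[OF dE[OF xx]]) (use s in auto)
    have d1: "((\<lambda>x. exp (- c * x)) has_real_derivative exp (- c * x) * (- c)) (at x within {0..s})"
      by (auto intro!: derivative_eq_intros)
    have d2: "((\<lambda>x. (E x)\<^sup>2 + B\<^sup>2 / c) has_real_derivative (2 * E x * E' x)) (at x within {0..s})"
      by (auto intro!: derivative_eq_intros dE')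
    have "(v has_real_derivative
       (exp (- c * x) * (- c) * ((E x)\<^sup>2 + B\<^sup>2 / c) + (2 * E x * E' x) * exp (- c * x))) (at x within {0..s})"
      unfolding v_def[abs_def] by (rule DERIV_mult[OF d1 d2])
    moreover have "exp (- c * x) * (- c) * ((E x)\<^sup>2 + B\<^sup>2 / c) + (2 * E x * E' x) * exp (- c * x) = v' x"
      unfolding v'_def using c by (simp add: field_simps)
    ultimately show ?thesis by simp
  qed
  have nonpos: "v' x \<le> 0" if x: "x \<in> {0..s}" for x
  proof -
    have xx: "x \<in> {0..s1}" using x s by auto
    have "2 * E x * E' x \<le> 2 * \<bar>E x\<bar> * \<bar>E' x\<bar>"
      using abs_ge_self[of "E x * E' x"] by (simp add: abs_mult)
    also have "\<dots> \<le> 2 * \<bar>E x\<bar> * (A * \<bar>E x\<bar> + B)"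
      using bd[OF xx] by (intro mult_left_mono) auto
    also have "\<dots> = 2 * A * (E x)\<^sup>2 + 2 * \<bar>E x\<bar> * B" by (simp add: algebra_simps power2_eq_square)
    also have "\<dots> \<le> 2 * A * (E x)\<^sup>2 + ((E x)\<^sup>2 + B\<^sup>2)"
    proof -
      have "0 \<le> (\<bar>E x\<bar> - B)\<^sup>2" by simp
      then have "2 * \<bar>E x\<bar> * B \<le> (E x)\<^sup>2 + B\<^sup>2" by (simp add: power2_diff)
      then show ?thesis by simp
    qed
    finally have "2 * E x * E' x - c * (E x)\<^sup>2 - B\<^sup>2 \<le> 0" unfolding c_def by (simp add: algebra_simps)
    then show ?thesis unfolding v'_def by (simp add: mult_nonneg_nonpos)
  qed
  have "v s - v 0 \<le> 0"
  proof -
    obtain x where x: "x \<in> {0..s}" and eq: "v s - v 0 = (\<lambda>h. h * v' x) (s - 0)"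
    proof -
      have "\<And>x. 0 \<le> x \<Longrightarrow> x \<le> s \<Longrightarrow> (v has_derivative (\<lambda>h. h * v' x)) (at x within {0..s})"
      proof -
        fix x assume "0 \<le> x" "x \<le> s"
        then have "(v has_derivative (*) (v' x)) (at x within {0..s})"
          using dv unfolding has_field_derivative_def by simp
        moreover have "(\<lambda>h. h * v' x) = (*) (v' x)" by (rule ext) (simp add: mult.commute)
        ultimately show "(v has_derivative (\<lambda>h. h * v' x)) (at x within {0..s})" by simp
      qed
      then show ?thesis using mvt_very_simple[of 0 s v "\<lambda>x h. h * v' x"] s that by auto
    qed
    then show ?thesis using nonpos[OF x] s by (simp add: mult_nonneg_nonpos)
  qed
  then have "exp (- c * s) * ((E s)\<^sup>2 + B\<^sup>2 / c) \<le> B\<^sup>2 / c"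
    unfolding v_def using E0 by simp
  then have "(E s)\<^sup>2 + B\<^sup>2 / c \<le> exp (c * s) * (B\<^sup>2 / c)"
    by (simp add: exp_minus field_simps)
  moreover have "exp (c * s) * (B\<^sup>2 / c) \<le> exp (c * s) * B\<^sup>2"
    using c by (intro mult_left_mono) (auto simp: field_simps intro: mult_right_mono[of 1 c "B\<^sup>2", simplified])
  moreover have "B\<^sup>2 / c \<ge> 0" using c by simp
  ultimately have "(E s)\<^sup>2 \<le> exp (c * s) * B\<^sup>2" by linarith
  also have "\<dots> \<le> (exp (c * s1) * B)\<^sup>2"
  proof -
    have "exp (c * s) \<le> exp (c * s1) * exp (c * s1)"
    proof -
      have "c * s \<le> c * s1" using s c by (intro mult_left_mono) auto
      then have "exp (c * s) \<le> exp (c * s1)" by simp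
      also have "\<dots> \<le> exp (c * s1) * exp (c * s1)" using s s1 c by simp
      finally show ?thesis .
    qed
    then have "exp (c * s) * B\<^sup>2 \<le> (exp (c * s1) * exp (c * s1)) * B\<^sup>2"
      by (intro mult_right_mono) auto
    then show ?thesis by (simp add: power2_eq_square algebra_simps)
  qed
  finally have "(E s)\<^sup>2 \<le> (exp (c * s1) * B)\<^sup>2" .
  then have "\<bar>E s\<bar> \<le> \<bar>exp (c * s1) * B\<bar>" by (simp add: abs_le_square_iff)
  then show ?thesis unfolding c_def using B by simp
qed



lemma unif_taylor:
  fixes F :: "real \<Rightarrow> real \<Rightarrow> real" and Fx :: "real \<times> real \<Rightarrow> real"
  assumes S: "compact S" and dF: "\<And>s x. s \<in> S \<Longrightarrow> ((F s) has_real_derivative Fx (s,x)) (at x)"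
    and cF: "continuous_on (S \<times> UNIV) Fx" and e: "\<epsilon> > 0"
  shows "\<exists>\<delta>>0. \<forall>s\<in>S. \<forall>z y. \<bar>z\<bar> \<le> N \<longrightarrow> \<bar>y - z\<bar> < \<delta> \<longrightarrow>
           \<bar>F s y - F s z - Fx (s,z) * (y - z)\<bar> \<le> \<epsilon> * \<bar>y - z\<bar>"
proof -
  have "uniformly_continuous_on (S \<times> cball 0 (\<bar>N\<bar>+1)) Fx"
    by (rule compact_uniformly_continuous) (auto intro: continuous_on_subset[OF cF] compact_Times S)
  then obtain d where d: "d > 0" and
    dd: "\<And>p p'. p \<in> S \<times> cball 0 (\<bar>N\<bar>+1) \<Longrightarrow> p' \<in> S \<times> cball 0 (\<bar>N\<bar>+1) \<Longrightarrow> dist p' p < d \<Longrightarrow> dist (Fx p') (Fx p) < \<epsilon>"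
    unfolding uniformly_continuous_on_def using e by metis
  show ?thesis
  proof (intro exI[of _ "min d 1"] conjI ballI allI impI)
    show "min d 1 > 0" using d by simp
    fix s z y assume s: "s \<in> S" and z: "\<bar>z\<bar> \<le> N" and yz: "\<bar>y - z\<bar> < min d 1"
    have close: "\<bar>Fx (s,\<xi>) - Fx (s,z)\<bar> \<le> \<epsilon>" if "\<bar>\<xi> - z\<bar> \<le> \<bar>y - z\<bar>" for \<xi>
    proof -
      have "(s,\<xi>) \<in> S \<times> cball 0 (\<bar>N\<bar>+1)" "(s,z) \<in> S \<times> cball 0 (\<bar>N\<bar>+1)"
        using s z that yz by (auto simp: dist_real_def)
      moreover have "dist (s,\<xi>) (s,z) < d" using that yz by (simp add: dist_Pair_Pair dist_real_def)
      ultimately show ?thesis using dd[of "(s,z)" "(s,\<xi>)"] by (simp add: dist_real_def)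
    qed
    have mvt: "\<exists>\<xi>. \<bar>\<xi> - z\<bar> \<le> \<bar>y - z\<bar> \<and> F s y - F s z = Fx (s,\<xi>) * (y - z)"
    proof (cases "z \<le> y")
      case True
      obtain \<xi> where "\<xi> \<in> {z..y}" "F s y - F s z = (\<lambda>h. Fx (s,\<xi>) * h) (y - z)"
        using mvt_very_simple[OF True, of "F s" "\<lambda>x h. Fx (s,x) * h"] dF[OF s]
        unfolding has_field_derivative_def by (metis has_derivative_subset top_greatest)
      then show ?thesis by (intro exI[of _ \<xi>]) auto
    next
      case False
      then have le: "y \<le> z" by simp
      obtain \<xi> where "\<xi> \<in> {y..z}" "F s z - F s y = (\<lambda>h. Fx (s,\<xi>) * h) (z - y)"
        using mvt_very_simple[OF le, of "F s" "\<lambda>x h. Fx (s,x) * h"] dF[OF s]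
        unfolding has_field_derivative_def by (metis has_derivative_subset top_greatest)
      then show ?thesis by (intro exI[of _ \<xi>]) (auto simp: algebra_simps)
    qed
    then obtain \<xi> where xi: "\<bar>\<xi> - z\<bar> \<le> \<bar>y - z\<bar>" and eq: "F s y - F s z = Fx (s,\<xi>) * (y - z)" by blast
    have "\<bar>F s y - F s z - Fx (s,z) * (y - z)\<bar> = \<bar>Fx (s,\<xi>) - Fx (s,z)\<bar> * \<bar>y - z\<bar>"
      unfolding eq by (simp add: abs_mult[symmetric] algebra_simps)
    also have "\<dots> \<le> \<epsilon> * \<bar>y - z\<bar>" using close[OF xi] by (intro mult_right_mono) auto
    finally show "\<bar>F s y - F s z - Fx (s,z) * (y - z)\<bar> \<le> \<epsilon> * \<bar>y - z\<bar>" .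
  qed
qed




lemma cont_bnd:
  fixes f :: "real \<Rightarrow> real"
  assumes "continuous_on {a..b} f"
  shows "\<exists>B\<ge>0. \<forall>s\<in>{a..b}. \<bar>f s\<bar> \<le> B"
proof -
  have "bounded (f ` {a..b})" by (rule compact_imp_bounded[OF compact_continuous_image[OF assms]]) simp
  then obtain B where "\<forall>x\<in>f ` {a..b}. norm x \<le> B" unfolding bounded_iff by blast
  then show ?thesis by (intro exI[of _ "max B 0"]) auto
qed

lemma chain_curve:
  fixes F :: "real \<Rightarrow> real \<Rightarrow> real" and Ft Fx :: "real \<times> real \<Rightarrow> real"
  assumes dF: "\<And>p. p \<in> S \<times> UNIV \<Longrightarrow> ((\<lambda>q. F (fst q) (snd q)) has_derivative (\<lambda>h. Ft p * fst h + Fx p * snd h)) (at p within S \<times> UNIV)"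
    and dY: "(Y has_real_derivative Y') (at s within S)" and s: "s \<in> S"
  shows "((\<lambda>s. F s (Y s)) has_real_derivative (Ft (s, Y s) + Fx (s, Y s) * Y')) (at s within S)"
proof -
  have dP: "((\<lambda>s. (s, Y s)) has_derivative (\<lambda>h. (h, Y' * h))) (at s within S)"
    using has_derivative_Pair[OF has_derivative_ident dY[unfolded has_field_derivative_def]] by simp
  have "((\<lambda>s. (\<lambda>q. F (fst q) (snd q)) ((s, Y s))) has_derivative
      (\<lambda>h. Ft (s, Y s) * fst (h, Y' * h) + Fx (s,Y s) * snd (h, Y' * h))) (at s within S)"
    by (rule has_derivative_in_compose2[OF dF _ s dP]) auto
  moreover have "(\<lambda>h. Ft (s, Y s) * fst (h, Y' * h) + Fx (s,Y s) * snd (h, Y' * h)) = (*) (Ft (s, Y s) + Fx (s, Y s) * Y')"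
    by (rule ext) (simp add: algebra_simps)
  ultimately show ?thesis unfolding has_field_derivative_def by simp
qed

lemma partial_x:
  fixes F :: "real \<Rightarrow> real \<Rightarrow> real" and Ft Fx :: "real \<times> real \<Rightarrow> real"
  assumes dF: "\<And>p. p \<in> S \<times> UNIV \<Longrightarrow> ((\<lambda>q. F (fst q) (snd q)) has_derivative (\<lambda>h. Ft p * fst h + Fx p * snd h)) (at p within S \<times> UNIV)"
    and s: "s \<in> S"
  shows "((\<lambda>x. F s x) has_real_derivative Fx (s,x)) (at x)"
proof -
  have dP: "((\<lambda>x. (s, x)) has_derivative (\<lambda>h. (0, h))) (at x within UNIV)"
    by (auto intro!: derivative_eq_intros)
  have "((\<lambda>x. (\<lambda>q. F (fst q) (snd q)) ((s, x))) has_derivative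
      (\<lambda>h. Ft (s, x) * fst (0::real, h) + Fx (s,x) * snd (0::real, h))) (at x within UNIV)"
    by (rule has_derivative_in_compose2[OF dF _ _ dP]) (use s in auto)
  moreover have "(\<lambda>h. Ft (s, x) * fst (0::real, h) + Fx (s,x) * snd (0::real, h)) = (*) (Fx (s, x))"
    by (rule ext) (simp add: algebra_simps)
  ultimately show ?thesis unfolding has_field_derivative_def by simp
qed

lemma cont_of_deriv2:
  fixes F :: "real \<Rightarrow> real \<Rightarrow> real" and Ft Fx :: "real \<times> real \<Rightarrow> real"
  assumes dF: "\<And>p. p \<in> S \<times> UNIV \<Longrightarrow> ((\<lambda>q. F (fst q) (snd q)) has_derivative (\<lambda>h. Ft p * fst h + Fx p * snd h)) (at p within S \<times> UNIV)"
  shows "continuous_on (S \<times> UNIV) (\<lambda>q. F (fst q) (snd q))"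
  unfolding continuous_on_eq_continuous_within
  using dF has_derivative_continuous by blast


lemma core:
  fixes R L :: "real \<Rightarrow> real \<Rightarrow> real" and Rt Rx Lt Lx :: "real \<times> real \<Rightarrow> real"
    and X :: "real \<Rightarrow> real \<Rightarrow> real" and Ri Li :: "real \<Rightarrow> real"
  assumes t: "0 \<le> t"
    and dR: "\<And>p. p \<in> {0..t} \<times> UNIV \<Longrightarrow> ((\<lambda>q. R (fst q) (snd q)) has_derivative (\<lambda>h. Rt p * fst h + Rx p * snd h)) (at p within {0..t} \<times> UNIV)"
    and dL: "\<And>p. p \<in> {0..t} \<times> UNIV \<Longrightarrow> ((\<lambda>q. L (fst q) (snd q)) has_derivative (\<lambda>h. Lt p * fst h + Lx p * snd h)) (at p within {0..t} \<times> UNIV)"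
    and cLx: "continuous_on ({0..t} \<times> UNIV) Lx"
    and pdeR: "\<And>p. p \<in> {0..t} \<times> UNIV \<Longrightarrow> Rt p + k_fun (R (fst p) (snd p) - L (fst p) (snd p)) * Rx p = 0"
    and pdeL: "\<And>p. p \<in> {0..t} \<times> UNIV \<Longrightarrow> Lt p - k_fun (R (fst p) (snd p) - L (fst p) (snd p)) * Lx p = 0"
    and Ri: "\<And>x. R 0 x = Ri x" and Li: "\<And>x. L 0 x = Li x"
    and X0: "\<And>a. X 0 a = a"
    and dX: "\<And>a s. s \<in> {0..t} \<Longrightarrow> ((\<lambda>\<tau>. X \<tau> a) has_real_derivative k_fun (R s (X s a) - L s (X s a))) (at s within {0..t})"
    and dR0: "(Ri has_real_derivative D) (at \<alpha>)"
  shows "((\<lambda>a. X t a) has_real_derivative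
      sqrt (k_fun (Ri \<alpha> - L t (X t \<alpha>)) / k_fun (Ri \<alpha> - Li \<alpha>)) *
      (1 + D * sqrt (k_fun (Ri \<alpha> - Li \<alpha>)) * integral {0..t} (\<lambda>\<tau>. f_fun (Ri \<alpha> - L \<tau> (X \<tau> \<alpha>))))) (at \<alpha>)"
proof -
  define S where "S = {0..t}"
  have S0: "0 \<in> S" and tS: "t \<in> S" using t by (auto simp: S_def)
  have kpos: "\<And>x. k_fun x > 0" using k_ge1 by (smt (verit))
  have Rc: "R s (X s a) = Ri a" if s: "s \<in> S" for s a
  proof -
    have "\<exists>c. \<forall>x\<in>S. R x (X x a) = c"
    proof (rule has_field_derivative_zero_constant)
      show "convex S" unfolding S_def by (rule convex_real_interval)
      fix x assume x: "x \<in> S"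
      have "((\<lambda>s. R s (X s a)) has_real_derivative
         (Rt (x, X x a) + Rx (x, X x a) * k_fun (R x (X x a) - L x (X x a)))) (at x within S)"
        by (rule chain_curve[OF dR[folded S_def] dX[folded S_def] x]) (use x in \<open>auto simp: S_def\<close>)
      moreover have "Rt (x, X x a) + Rx (x, X x a) * k_fun (R x (X x a) - L x (X x a)) = 0"
        using pdeR[of "(x, X x a)"] x by (simp add: S_def algebra_simps)
      ultimately show "((\<lambda>s. R s (X s a)) has_real_derivative 0) (at x within S)" by simp
    qed
    then obtain c where c: "\<forall>x\<in>S. R x (X x a) = c" by blast
    have "c = Ri a" using c[rule_format, OF S0] by (simp add: X0 Ri)
    then show ?thesis using c s by simp
  qed
  have Xc: "continuous_on S (\<lambda>s. X s a)" for a
    by (rule DERIV_continuous_on[OF dX[folded S_def]]) (simp add: S_def)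
  have Lc: "continuous_on (S \<times> UNIV) (\<lambda>q. L (fst q) (snd q))"
    by (rule cont_of_deriv2[OF dL[folded S_def]]) (simp add: S_def)
  have dLx: "((\<lambda>x. L s x) has_real_derivative Lx (s,x)) (at x)" if "s \<in> S" for s x
    by (rule partial_x[OF dL[folded S_def] that]) (simp add: S_def)
  define u where "u s = X s \<alpha>" for s
  define \<eta> where "\<eta> s = Ri \<alpha> - L s (u s)" for s
  define k0 where "k0 = k_fun (Ri \<alpha> - Li \<alpha>)"
  have \<eta>0: "\<eta> 0 = Ri \<alpha> - Li \<alpha>" by (simp add: \<eta>_def u_def X0 Li)
  have ku: "k_fun (R s (u s) - L s (u s)) = k_fun (\<eta> s)" if "s \<in> S" for s
    using Rc[OF that] by (simp add: \<eta>_def u_def)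
  have d\<eta>: "(\<eta> has_real_derivative - (2 * k_fun (\<eta> s) * Lx (s, u s))) (at s within S)" if s: "s \<in> S" for s
  proof -
    have "((\<lambda>s. L s (u s)) has_real_derivative (Lt (s, u s) + Lx (s, u s) * k_fun (R s (u s) - L s (u s)))) (at s within S)"
      unfolding u_def by (rule chain_curve[OF dL[folded S_def] dX[folded S_def] s]) (use s in \<open>auto simp: S_def\<close>)
    moreover have "Lt (s, u s) + Lx (s, u s) * k_fun (R s (u s) - L s (u s)) = 2 * k_fun (\<eta> s) * Lx (s, u s)"
      using pdeL[of "(s, u s)"] s ku[OF s] by (simp add: S_def algebra_simps)
    ultimately have "((\<lambda>s. L s (u s)) has_real_derivative 2 * k_fun (\<eta> s) * Lx (s, u s)) (at s within S)" by simp
    then show ?thesis unfolding \<eta>_def[abs_def] by (auto intro!: derivative_eq_intros)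
  qed
  have c\<eta>: "continuous_on S \<eta>" by (rule DERIV_continuous_on[OF d\<eta>])
  have cf: "continuous_on S (\<lambda>s. f_fun (\<eta> s))" by (rule continuous_on_compose2[OF f_cont c\<eta>]) auto
  define I where "I s = integral {0..s} (\<lambda>\<tau>. f_fun (\<eta> \<tau>))" for s
  have dI: "(I has_real_derivative f_fun (\<eta> s)) (at s within S)" if "s \<in> S" for s
    unfolding I_def has_real_derivative_iff_has_vector_derivative S_def
    by (rule integral_has_vector_derivative[OF cf[unfolded S_def]]) (use that in \<open>simp add: S_def\<close>)
  define G where "G s = sqrt (k_fun (\<eta> s) / k0) * (1 + D * sqrt k0 * I s)" for s
  have k0pos: "k0 > 0" using kpos by (simp add: k0_def)
  have dG: "(G has_real_derivative kd (\<eta> s) * (D - Lx (s, u s) * G s)) (at s within S)" if s: "s \<in> S" for s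
  proof -
    define P where "P s = sqrt (k_fun (\<eta> s))" for s
    have Geq: "G = (\<lambda>s. P s / sqrt k0 * (1 + D * sqrt k0 * I s))"
      by (rule ext) (simp add: G_def P_def real_sqrt_divide)
    have dk: "((\<lambda>s. k_fun (\<eta> s)) has_real_derivative kd (\<eta> s) * (- (2 * k_fun (\<eta> s) * Lx (s, u s)))) (at s within S)"
      by (rule DERIV_chain2[OF k_deriv d\<eta>[OF s]])
    have dP: "(P has_real_derivative inverse (sqrt (k_fun (\<eta> s))) / 2 * (kd (\<eta> s) * (- (2 * k_fun (\<eta> s) * Lx (s, u s))))) (at s within S)"
      unfolding P_def[abs_def] by (rule DERIV_chain2[OF DERIV_real_sqrt[OF kpos] dk])
    have dW: "((\<lambda>s. 1 + D * sqrt k0 * I s) has_real_derivative D * sqrt k0 * f_fun (\<eta> s)) (at s within S)"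
      by (auto intro!: derivative_eq_intros dI[OF s])
    have "(G has_real_derivative P s / sqrt k0 * (D * sqrt k0 * f_fun (\<eta> s)) + (inverse (sqrt (k_fun (\<eta> s))) / 2 * (kd (\<eta> s) * (- (2 * k_fun (\<eta> s) * Lx (s, u s))))) / sqrt k0 * (1 + D * sqrt k0 * I s)) (at s within S)"
      unfolding Geq by (rule DERIV_mult'[OF DERIV_cdivide[OF dP] dW])
    moreover have "P s / sqrt k0 * (D * sqrt k0 * f_fun (\<eta> s)) + (inverse (sqrt (k_fun (\<eta> s))) / 2 * (kd (\<eta> s) * (- (2 * k_fun (\<eta> s) * Lx (s, u s))))) / sqrt k0 * (1 + D * sqrt k0 * I s) = kd (\<eta> s) * (D - Lx (s, u s) * G s)"
    proof -
      have sk: "sqrt (k_fun (\<eta> s)) > 0" "sqrt k0 > 0" using kpos k0pos by auto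
      have kk: "k_fun (\<eta> s) = sqrt (k_fun (\<eta> s)) * sqrt (k_fun (\<eta> s))" using kpos[of "\<eta> s"] by simp
      have kk2: "\<And>x. sqrt (k_fun (\<eta> s)) * (sqrt (k_fun (\<eta> s)) * x) = k_fun (\<eta> s) * x"
        by (subst kk) (simp add: mult.assoc)
      show ?thesis unfolding G_def P_def f_alt real_sqrt_divide
        using sk by (simp add: field_simps) (simp add: kk2)
    qed
    ultimately show ?thesis by simp
  qed
  have cG: "continuous_on S G" by (rule DERIV_continuous_on[OF dG])
  have G0: "G 0 = 1" using k0pos by (simp add: G_def I_def \<eta>0 k0_def)
  have cu: "continuous_on S u" unfolding u_def[abs_def] by (rule Xc)
  have cLxu: "continuous_on S (\<lambda>s. Lx (s, u s))"
    by (rule continuous_on_compose2[OF cLx[folded S_def]]) (auto intro!: continuous_intros cu)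
  have ckd: "continuous_on S (\<lambda>s. kd (\<eta> s))"
    by (rule continuous_on_compose2[OF kd_cont c\<eta>]) auto
  obtain N1 where N1: "\<forall>s\<in>S. \<bar>u s\<bar> \<le> N1" using cont_bnd[OF cu[unfolded S_def]] S_def by auto
  obtain N2 where N2: "\<forall>s\<in>S. \<bar>\<eta> s\<bar> \<le> N2" using cont_bnd[OF c\<eta>[unfolded S_def]] S_def by auto
  obtain Kp where Kp: "Kp \<ge> 0" "\<forall>s\<in>S. \<bar>kd (\<eta> s)\<bar> \<le> Kp" using cont_bnd[OF ckd[unfolded S_def]] S_def by auto
  obtain Lxb where Lxb: "Lxb \<ge> 0" "\<forall>s\<in>S. \<bar>Lx (s, u s)\<bar> \<le> Lxb" using cont_bnd[OF cLxu[unfolded S_def]] S_def by auto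
  obtain Gb where Gb: "Gb \<ge> 0" "\<forall>s\<in>S. \<bar>G s\<bar> \<le> Gb" using cont_bnd[OF cG[unfolded S_def]] S_def by auto
  have cS: "compact S" by (simp add: S_def)
  have lim: "(\<lambda>h. (X t (\<alpha> + h) - X t \<alpha>) / h) \<midarrow>0\<rightarrow> G t"
    unfolding LIM_eq
  proof (intro allI impI)
    fix \<epsilon> :: real assume \<epsilon>: "\<epsilon> > 0"
    define A where "A = Kp * Lxb"
    define M where "M = exp ((2*A+1) * t)"
    define C where "C = Kp * (2 + Gb) + (1 + \<bar>D\<bar>) + (1 + Gb) * (1 + Lxb)"
    define e0 where "e0 = min \<epsilon> (1/2)"
    define \<epsilon>' where "\<epsilon>' = min 1 (e0 / (2 * M * C))"
    have A: "A \<ge> 0" using Kp Lxb by (simp add: A_def)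
    have M: "M \<ge> 1" using A t by (simp add: M_def)
    have C: "C \<ge> 1" using Kp Gb Lxb by (simp add: C_def)
    have e0: "e0 > 0" "e0 \<le> \<epsilon>" "e0 \<le> 1/2" using \<epsilon> by (auto simp: e0_def)
    have e': "\<epsilon>' > 0" "\<epsilon>' \<le> 1" using e0 M C by (auto simp: \<epsilon>'_def)
    have MeC: "M * \<epsilon>' * C \<le> e0 / 2"
    proof -
      have "\<epsilon>' \<le> e0 / (2 * M * C)" by (simp add: \<epsilon>'_def)
      then have "M * C * \<epsilon>' \<le> M * C * (e0 / (2 * M * C))" using M C by (intro mult_left_mono) auto
      also have "\<dots> = e0 / 2" using M C by (simp add: field_simps)
      finally show ?thesis by (simp add: algebra_simps)
    qed
    obtain \<delta>1 where \<delta>1: "\<delta>1 > 0" and tk: "\<And>z y. \<bar>z\<bar> \<le> N2 \<Longrightarrow> \<bar>y - z\<bar> < \<delta>1 \<Longrightarrow>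
        \<bar>k_fun y - k_fun z - kd z * (y - z)\<bar> \<le> \<epsilon>' * \<bar>y - z\<bar>"
    proof -
      have "\<exists>\<delta>>0. \<forall>s\<in>{0::real}. \<forall>z y. \<bar>z\<bar> \<le> N2 \<longrightarrow> \<bar>y - z\<bar> < \<delta> \<longrightarrow>
           \<bar>(\<lambda>s. k_fun) s y - (\<lambda>s. k_fun) s z - (\<lambda>p. kd (snd p)) (s,z) * (y - z)\<bar> \<le> \<epsilon>' * \<bar>y - z\<bar>"
        by (rule unif_taylor) (auto simp: k_deriv e' intro!: continuous_on_compose2[OF kd_cont] continuous_intros)
      then show ?thesis using that by auto
    qed
    obtain \<delta>3 where \<delta>3: "\<delta>3 > 0" and tL: "\<And>s z y. s \<in> S \<Longrightarrow> \<bar>z\<bar> \<le> N1 \<Longrightarrow> \<bar>y - z\<bar> < \<delta>3 \<Longrightarrow>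
        \<bar>L s y - L s z - Lx (s,z) * (y - z)\<bar> \<le> \<epsilon>' * \<bar>y - z\<bar>"
    proof -
      have "\<exists>\<delta>>0. \<forall>s\<in>S. \<forall>z y. \<bar>z\<bar> \<le> N1 \<longrightarrow> \<bar>y - z\<bar> < \<delta> \<longrightarrow>
           \<bar>L s y - L s z - Lx (s,z) * (y - z)\<bar> \<le> \<epsilon>' * \<bar>y - z\<bar>"
        by (rule unif_taylor[OF cS _ cLx[folded S_def] e'(1)]) (use dLx in auto)
      then show ?thesis using that by auto
    qed
    obtain \<delta>2 where \<delta>2: "\<delta>2 > 0" and tR: "\<And>h. \<bar>h\<bar> < \<delta>2 \<Longrightarrow> \<bar>Ri (\<alpha> + h) - Ri \<alpha> - D * h\<bar> \<le> \<epsilon>' * \<bar>h\<bar>"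
    proof -
      from dR0[unfolded DERIV_def LIM_eq] e'(1) obtain d where d: "d > 0"
        and dd: "\<And>h. h \<noteq> 0 \<and> norm (h - 0) < d \<Longrightarrow> norm ((Ri (\<alpha> + h) - Ri \<alpha>) / h - D) < \<epsilon>'" by blast
      have "\<bar>Ri (\<alpha> + h) - Ri \<alpha> - D * h\<bar> \<le> \<epsilon>' * \<bar>h\<bar>" if h: "\<bar>h\<bar> < d" for h
      proof (cases "h = 0")
        case False
        have "\<bar>Ri (\<alpha> + h) - Ri \<alpha> - D * h\<bar> = \<bar>(Ri (\<alpha> + h) - Ri \<alpha>) / h - D\<bar> * \<bar>h\<bar>"
          using False by (simp add: abs_mult[symmetric] field_simps)
        also have "\<dots> \<le> \<epsilon>' * \<bar>h\<bar>" using dd[of h] False h by (intro mult_right_mono) auto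
        finally show ?thesis .
      qed simp
      then show ?thesis using that d by blast
    qed
    define d where "d = min \<delta>2 (min (\<delta>3 / (1 + Gb)) (\<delta>1 / ((1 + \<bar>D\<bar>) + (1 + Gb) * (1 + Lxb))))"
    have dpos: "d > 0" using \<delta>1 \<delta>2 \<delta>3 Gb Lxb by (simp add: d_def add_pos_nonneg)
    show "\<exists>d>0. \<forall>h. h \<noteq> 0 \<and> norm (h - 0) < d \<longrightarrow> norm ((X t (\<alpha> + h) - X t \<alpha>) / h - G t) < \<epsilon>"
    proof (intro exI[of _ d] conjI allI impI dpos)
      fix h :: real assume h: "h \<noteq> 0 \<and> norm (h - 0) < d"
      then have h0: "h \<noteq> 0" and hd: "\<bar>h\<bar> < d" by auto
      define E where "E s = X s (\<alpha> + h) - u s - h * G s" for s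
      define E' where "E' s = k_fun (Ri (\<alpha> + h) - L s (X s (\<alpha> + h))) - k_fun (\<eta> s) - h * (kd (\<eta> s) * (D - Lx (s, u s) * G s))" for s
      have dE: "(E has_real_derivative E' s) (at s within S)" if s: "s \<in> S" for s
      proof -
        have d1: "((\<lambda>s. X s (\<alpha> + h)) has_real_derivative k_fun (Ri (\<alpha> + h) - L s (X s (\<alpha> + h)))) (at s within S)"
          using dX[of s "\<alpha> + h"] s Rc[OF s, of "\<alpha> + h"] by (simp add: S_def)
        have d2: "(u has_real_derivative k_fun (\<eta> s)) (at s within S)"
          using dX[of s \<alpha>] s ku[OF s] unfolding u_def[abs_def] by (simp add: S_def)
        show ?thesis unfolding E_def[abs_def] E'_def
          by (rule derivative_eq_intros d1 d2 dG[OF s] refl | simp)+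
      qed
      have E0: "E 0 = 0" by (simp add: E_def u_def X0 G0)
      have cE: "continuous_on S E" by (rule DERIV_continuous_on[OF dE])
      have pw: "\<bar>E' s\<bar> \<le> A * \<bar>E s\<bar> + \<epsilon>' * C * \<bar>h\<bar>" if s: "s \<in> S" and Es: "\<bar>E s\<bar> \<le> \<bar>h\<bar>" for s
      proof -
        define z where "z = u s"
        define y where "y = X s (\<alpha> + h)"
        define \<Delta> where "\<Delta> = y - z"
        define et where "et = \<eta> s"
        define eh where "eh = Ri (\<alpha> + h) - L s y"
        define \<rho>1 where "\<rho>1 = k_fun eh - k_fun et - kd et * (eh - et)"
        define \<rho>2 where "\<rho>2 = Ri (\<alpha> + h) - Ri \<alpha> - D * h"
        define \<rho>3 where "\<rho>3 = L s y - L s z - Lx (s, z) * \<Delta>"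
        have hd2: "\<bar>h\<bar> < \<delta>2" using hd by (simp add: d_def)
        have r2: "\<bar>\<rho>2\<bar> \<le> \<epsilon>' * \<bar>h\<bar>" unfolding \<rho>2_def by (rule tR[OF hd2])
        have Deq: "\<Delta> = E s + h * G s" by (simp add: \<Delta>_def E_def y_def z_def)
        have Gs: "\<bar>G s\<bar> \<le> Gb" using Gb s by auto
        have "\<bar>\<Delta>\<bar> \<le> \<bar>E s\<bar> + \<bar>h\<bar> * \<bar>G s\<bar>" unfolding Deq by (metis abs_mult abs_triangle_ineq)
        also have "\<dots> \<le> \<bar>h\<bar> + \<bar>h\<bar> * Gb" using Es Gs by (intro add_mono mult_left_mono) auto
        finally have D1: "\<bar>\<Delta>\<bar> \<le> \<bar>h\<bar> * (1 + Gb)" by (simp add: algebra_simps)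
        have "\<bar>h\<bar> * (1 + Gb) < \<delta>3"
        proof -
          have "\<bar>h\<bar> < \<delta>3 / (1 + Gb)" using hd by (simp add: d_def)
          then show ?thesis using Gb by (simp add: field_simps)
        qed
        then have D3: "\<bar>y - z\<bar> < \<delta>3" using D1 by (simp add: \<Delta>_def)
        have zN: "\<bar>z\<bar> \<le> N1" using N1 s by (simp add: z_def)
        have r3: "\<bar>\<rho>3\<bar> \<le> \<epsilon>' * \<bar>\<Delta>\<bar>" unfolding \<rho>3_def \<Delta>_def by (rule tL[OF s zN D3])
        have Lxs: "\<bar>Lx (s, z)\<bar> \<le> Lxb" using Lxb s by (simp add: z_def)
        have kds: "\<bar>kd et\<bar> \<le> Kp" using Kp s by (simp add: et_def)
        have ediff: "eh - et = \<rho>2 + D * h - \<rho>3 - Lx (s, z) * \<Delta>"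
          by (simp add: eh_def et_def \<eta>_def \<rho>2_def \<rho>3_def z_def)
        have "\<bar>eh - et\<bar> \<le> \<bar>\<rho>2\<bar> + \<bar>D\<bar> * \<bar>h\<bar> + \<bar>\<rho>3\<bar> + \<bar>Lx (s, z)\<bar> * \<bar>\<Delta>\<bar>"
          unfolding ediff using abs_mult[of D h] abs_mult[of "Lx (s, z)" \<Delta>] by (smt (verit))
        also have "\<dots> \<le> \<epsilon>' * \<bar>h\<bar> + \<bar>D\<bar> * \<bar>h\<bar> + \<epsilon>' * \<bar>\<Delta>\<bar> + Lxb * \<bar>\<Delta>\<bar>"
          using r2 r3 Lxs by (intro add_mono mult_right_mono) auto
        also have "\<dots> \<le> \<bar>h\<bar> * (1 + \<bar>D\<bar>) + \<bar>\<Delta>\<bar> * (1 + Lxb)"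
          using e' mult_right_mono[of "\<epsilon>'" 1 "\<bar>h\<bar>"] mult_right_mono[of "\<epsilon>'" 1 "\<bar>\<Delta>\<bar>"]
          by (simp add: algebra_simps)
        finally have ee1: "\<bar>eh - et\<bar> \<le> \<bar>h\<bar> * (1 + \<bar>D\<bar>) + \<bar>\<Delta>\<bar> * (1 + Lxb)" .
        also have "\<dots> \<le> \<bar>h\<bar> * (1 + \<bar>D\<bar>) + \<bar>h\<bar> * (1 + Gb) * (1 + Lxb)"
          using D1 Lxb by (intro add_left_mono mult_right_mono) auto
        also have "\<dots> = \<bar>h\<bar> * ((1 + \<bar>D\<bar>) + (1 + Gb) * (1 + Lxb))" by (simp add: algebra_simps)
        also have "\<dots> < \<delta>1"
        proof -
          have pos: "(1 + \<bar>D\<bar>) + (1 + Gb) * (1 + Lxb) > 0" using Gb Lxb by (simp add: add_pos_nonneg)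
          have "\<bar>h\<bar> < \<delta>1 / ((1 + \<bar>D\<bar>) + (1 + Gb) * (1 + Lxb))" using hd by (simp add: d_def)
          then show ?thesis using pos by (simp add: field_simps)
        qed
        finally have ee: "\<bar>eh - et\<bar> < \<delta>1" .
        have etN: "\<bar>et\<bar> \<le> N2" using N2 s by (simp add: et_def)
        have r1: "\<bar>\<rho>1\<bar> \<le> \<epsilon>' * \<bar>eh - et\<bar>" unfolding \<rho>1_def by (rule tk[OF etN ee])
        have E'eq: "E' s = - (kd et * Lx (s, z) * E s) + kd et * (\<rho>2 - \<rho>3) + \<rho>1"
        proof -
          have "E' s = k_fun eh - k_fun et - h * (kd et * (D - Lx (s, z) * G s))"
            by (simp add: E'_def eh_def et_def y_def z_def)
          also have "\<dots> = \<rho>1 + kd et * (eh - et) - h * (kd et * (D - Lx (s, z) * G s))"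
            by (simp add: \<rho>1_def)
          also have "\<dots> = \<rho>1 + kd et * (\<rho>2 + D * h - \<rho>3 - Lx (s, z) * (E s + h * G s)) - h * (kd et * (D - Lx (s, z) * G s))"
            by (simp only: ediff Deq)
          also have "\<dots> = - (kd et * Lx (s, z) * E s) + kd et * (\<rho>2 - \<rho>3) + \<rho>1"
            by (simp add: algebra_simps)
          finally show ?thesis .
        qed
        have "\<bar>E' s\<bar> \<le> \<bar>kd et\<bar> * \<bar>Lx (s, z)\<bar> * \<bar>E s\<bar> + \<bar>kd et\<bar> * (\<bar>\<rho>2\<bar> + \<bar>\<rho>3\<bar>) + \<bar>\<rho>1\<bar>"
        proof -
          have a1: "\<bar>kd et * Lx (s, z) * E s\<bar> = \<bar>kd et\<bar> * \<bar>Lx (s, z)\<bar> * \<bar>E s\<bar>" by (simp add: abs_mult)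
          have a2: "\<bar>kd et * (\<rho>2 - \<rho>3)\<bar> \<le> \<bar>kd et\<bar> * (\<bar>\<rho>2\<bar> + \<bar>\<rho>3\<bar>)"
            unfolding abs_mult by (intro mult_left_mono) auto
          show ?thesis unfolding E'eq using a1 a2 by (smt (verit))
        qed
        also have "\<dots> \<le> Kp * Lxb * \<bar>E s\<bar> + Kp * (\<epsilon>' * \<bar>h\<bar> + \<epsilon>' * \<bar>\<Delta>\<bar>) + \<epsilon>' * (\<bar>h\<bar> * (1 + \<bar>D\<bar>) + \<bar>\<Delta>\<bar> * (1 + Lxb))"
        proof (intro add_mono mult_mono)
          show "\<bar>\<rho>1\<bar> \<le> \<epsilon>' * (\<bar>h\<bar> * (1 + \<bar>D\<bar>) + \<bar>\<Delta>\<bar> * (1 + Lxb))"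
            using r1 ee1 e' by (meson mult_left_mono less_imp_le order_trans)
        qed (use kds Lxs r2 r3 Kp Lxb in auto)
        also have "\<dots> \<le> A * \<bar>E s\<bar> + \<epsilon>' * C * \<bar>h\<bar>"
        proof -
          have "Kp * (\<epsilon>' * \<bar>h\<bar> + \<epsilon>' * \<bar>\<Delta>\<bar>) + \<epsilon>' * (\<bar>h\<bar> * (1 + \<bar>D\<bar>) + \<bar>\<Delta>\<bar> * (1 + Lxb))
              = \<epsilon>' * (Kp * \<bar>h\<bar> + \<bar>h\<bar> * (1 + \<bar>D\<bar>) + \<bar>\<Delta>\<bar> * (Kp + 1 + Lxb))"
            by (simp add: algebra_simps)
          also have "\<dots> \<le> \<epsilon>' * (Kp * \<bar>h\<bar> + \<bar>h\<bar> * (1 + \<bar>D\<bar>) + \<bar>h\<bar> * (1 + Gb) * (Kp + 1 + Lxb))"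
            using D1 e' Kp Lxb by (intro mult_left_mono add_left_mono mult_right_mono) auto
          also have "\<dots> = \<epsilon>' * C * \<bar>h\<bar>" by (simp add: C_def algebra_simps)
          finally show ?thesis by (simp add: A_def)
        qed
        finally show ?thesis .
      qed
      have key: "\<bar>E s\<bar> \<le> M * (\<epsilon>' * C * \<bar>h\<bar>)" if s1: "s1 \<in> S" and hyp: "\<forall>s\<in>{0..s1}. \<bar>E s\<bar> \<le> \<bar>h\<bar>" and s: "s \<in> {0..s1}" for s1 s
      proof -
        have sub: "{0..s1} \<subseteq> S" using s1 by (auto simp: S_def)
        have "\<bar>E s\<bar> \<le> exp ((2*A+1) * s1) * (\<epsilon>' * C * \<bar>h\<bar>)"
        proof (rule gronwall_sq[where E=E and E'=E' and A=A and B="\<epsilon>' * C * \<bar>h\<bar>"])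
          show "0 \<le> A" "E 0 = 0" "s \<in> {0..s1}" using A E0 s by auto
          show "0 \<le> s1" using s1 by (simp add: S_def)
          show "0 \<le> \<epsilon>' * C * \<bar>h\<bar>" using e' C by simp
          show "(E has_real_derivative E' x) (at x within {0..s1})" if "x \<in> {0..s1}" for x
            using has_field_derivative_subset[OF dE sub] that sub by auto
          show "\<bar>E' x\<bar> \<le> A * \<bar>E x\<bar> + \<epsilon>' * C * \<bar>h\<bar>" if "x \<in> {0..s1}" for x
            using pw that sub hyp by auto
        qed
        also have "\<dots> \<le> M * (\<epsilon>' * C * \<bar>h\<bar>)"
          unfolding M_def using s1 A e' C by (intro mult_right_mono) (auto simp: S_def)
        finally show ?thesis .
      qed
      have small: "M * (\<epsilon>' * C * \<bar>h\<bar>) \<le> e0 / 2 * \<bar>h\<bar>"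
        using mult_right_mono[OF MeC, of "\<bar>h\<bar>"] by (simp add: algebra_simps)
      have all: "\<forall>s\<in>S. \<bar>E s\<bar> \<le> \<bar>h\<bar>"
      proof (rule ccontr)
        assume "\<not> (\<forall>s\<in>S. \<bar>E s\<bar> \<le> \<bar>h\<bar>)"
        then obtain s0 where s0: "s0 \<in> S" "\<bar>E s0\<bar> > \<bar>h\<bar>" by force
        define T1 where "T1 = S \<inter> (\<lambda>s. \<bar>E s\<bar>) -` {\<bar>h\<bar>..}"
        have "closed T1" unfolding T1_def
          by (rule continuous_closed_preimage) (auto intro!: continuous_intros cE[unfolded S_def] simp: S_def)
        moreover have "bounded T1" by (rule bounded_subset[of S]) (auto simp: T1_def S_def)
        ultimately have cT: "compact T1" by (simp add: compact_eq_bounded_closed)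
        have neT: "T1 \<noteq> {}" using s0 by (auto simp: T1_def)
        obtain sm where sm: "sm \<in> T1" and smin: "\<And>y. y \<in> T1 \<Longrightarrow> sm \<le> y"
          using compact_attains_inf[OF cT neT] by auto
        have smS: "sm \<in> S" and smE: "\<bar>h\<bar> \<le> \<bar>E sm\<bar>" using sm by (auto simp: T1_def)
        have "\<exists>x. 0 \<le> x \<and> x \<le> sm \<and> \<bar>E x\<bar> = \<bar>h\<bar>"
        proof (rule IVT'[of "\<lambda>s. \<bar>E s\<bar>"])
          show "\<bar>E 0\<bar> \<le> \<bar>h\<bar>" by (simp add: E0)
          show "\<bar>h\<bar> \<le> \<bar>E sm\<bar>" by (rule smE)
          show "0 \<le> sm" using smS by (simp add: S_def)
          show "continuous_on {0..sm} (\<lambda>s. \<bar>E s\<bar>)"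
            by (intro continuous_intros continuous_on_subset[OF cE]) (use smS in \<open>auto simp: S_def\<close>)
        qed
        then obtain x where x: "0 \<le> x" "x \<le> sm" "\<bar>E x\<bar> = \<bar>h\<bar>" by blast
        have "x \<in> T1" using x smS by (auto simp: T1_def S_def)
        then have "x = sm" using smin[of x] x by simp
        have hyp: "\<forall>s\<in>{0..sm}. \<bar>E s\<bar> \<le> \<bar>h\<bar>"
        proof
          fix s assume s: "s \<in> {0..sm}"
          show "\<bar>E s\<bar> \<le> \<bar>h\<bar>"
          proof (cases "s = sm")
            case True then show ?thesis using x \<open>x = sm\<close> by simp
          next
            case False
            then have "s < sm" using s by simp
            then have "s \<notin> T1" using smin by force
            then show ?thesis using s smS by (auto simp: T1_def S_def)
          qed
        qed
        have "\<bar>E sm\<bar> \<le> e0 / 2 * \<bar>h\<bar>" using key[OF smS hyp, of sm] smS small by (simp add: S_def)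
        moreover have "e0 / 2 * \<bar>h\<bar> < \<bar>h\<bar>" using e0 h0 by simp
        ultimately show False using smE by simp
      qed
      have "\<bar>E t\<bar> \<le> e0 / 2 * \<bar>h\<bar>"
        using key[OF tS, of t] all small tS by (auto simp: S_def)
      also have "\<dots> < \<epsilon> * \<bar>h\<bar>" using e0 h0 by (intro mult_strict_right_mono) auto
      finally have Et: "\<bar>E t\<bar> < \<epsilon> * \<bar>h\<bar>" .
      have "(X t (\<alpha> + h) - X t \<alpha>) / h - G t = E t / h"
        using h0 by (simp add: E_def u_def field_simps)
      then show "norm ((X t (\<alpha> + h) - X t \<alpha>) / h - G t) < \<epsilon>"
        using Et h0 by (simp add: abs_divide pos_divide_less_eq)
    qed
  qed
  have "G t = sqrt (k_fun (Ri \<alpha> - L t (X t \<alpha>)) / k_fun (Ri \<alpha> - Li \<alpha>)) *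
      (1 + D * sqrt (k_fun (Ri \<alpha> - Li \<alpha>)) * integral {0..t} (\<lambda>\<tau>. f_fun (Ri \<alpha> - L \<tau> (X \<tau> \<alpha>))))"
    by (simp add: G_def \<eta>_def u_def k0_def I_def)
  then show ?thesis using lim unfolding DERIV_def by simp
qed




lemma reflect_deriv:
  fixes F :: "real \<Rightarrow> real \<Rightarrow> real" and Ft Fx :: "real \<times> real \<Rightarrow> real"
  assumes dF: "\<And>p. p \<in> S \<times> UNIV \<Longrightarrow> ((\<lambda>q. F (fst q) (snd q)) has_derivative (\<lambda>h. Ft p * fst h + Fx p * snd h)) (at p within S \<times> UNIV)"
    and p: "p \<in> S \<times> UNIV"
  shows "((\<lambda>q. F (fst q) (- snd q)) has_derivative
     (\<lambda>h. Ft (fst p, - snd p) * fst h + (- Fx (fst p, - snd p)) * snd h)) (at p within S \<times> UNIV)"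
proof -
  have dP: "((\<lambda>q::real\<times>real. (fst q, - snd q)) has_derivative (\<lambda>h. (fst h, - snd h))) (at p within S \<times> UNIV)"
    by (auto intro!: derivative_eq_intros)
  have "((\<lambda>q. (\<lambda>q. F (fst q) (snd q)) (fst q, - snd q)) has_derivative
      (\<lambda>h. Ft (fst p, - snd p) * fst (fst h, - snd h) + Fx (fst p, - snd p) * snd (fst h, - snd h))) (at p within S \<times> UNIV)"
    by (rule has_derivative_in_compose2[OF dF _ p dP]) auto
  then show ?thesis by simp
qed

theorem mainTheorem4:
  fixes w0 :: "real \<Rightarrow> real"
    and r l x1 x2 :: "real \<Rightarrow> real \<Rightarrow> real"
    and tstar :: ereal
  defines "r0 \<equiv> (\<lambda>x. - L_fun (deriv w0 x))"
      and "l0 \<equiv> (\<lambda>x. L_fun (deriv w0 x))"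
  assumes w0_C2: "\<forall>x. w0 differentiable (at x)" "\<forall>x. deriv w0 differentiable (at x)"
               "continuous_on UNIV (deriv (deriv w0))"
    and w0'_bdd: "bounded (range (deriv w0))"
    and w0'_nonconst: "\<not> (\<exists>c. \<forall>x. deriv w0 x = c)"
    and tstar_pos: "0 < tstar"
    and sol: "solD r0 l0 tstar r l"
    and maximal: "\<forall>T'. tstar < T' \<longrightarrow> \<not> (\<exists>r' l'. solD r0 l0 T' r' l')"
    and char1: "\<forall>\<alpha>. x1 0 \<alpha> = \<alpha> \<and>
       (\<forall>s \<in> Dom tstar. ((\<lambda>\<tau>. x1 \<tau> \<alpha>) has_real_derivative
           k_fun (r s (x1 s \<alpha>) - l s (x1 s \<alpha>))) (at s within Dom tstar))"
    and char2: "\<forall>\<beta>. x2 0 \<beta> = \<beta> \<and>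
       (\<forall>s \<in> Dom tstar. ((\<lambda>\<tau>. x2 \<tau> \<beta>) has_real_derivative
           - k_fun (r s (x2 s \<beta>) - l s (x2 s \<beta>))) (at s within Dom tstar))"
  shows "\<forall>t \<in> Dom tstar. \<forall>\<alpha> \<beta>.
     ((\<lambda>a. x1 t a) has_real_derivative
        sqrt (k_fun (r0 \<alpha> - l t (x1 t \<alpha>)) / k_fun (2 * r0 \<alpha>)) *
        (1 + deriv r0 \<alpha> * sqrt (k_fun (2 * r0 \<alpha>)) *
             integral {0..t} (\<lambda>\<tau>. f_fun (r0 \<alpha> - l \<tau> (x1 \<tau> \<alpha>))))) (at \<alpha>) \<and>
     ((\<lambda>b. x2 t b) has_real_derivative
        sqrt (k_fun (r t (x2 t \<beta>) - l0 \<beta>) / k_fun (2 * r0 \<beta>)) *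
        (1 + deriv l0 \<beta> * sqrt (k_fun (2 * r0 \<beta>)) *
             integral {0..t} (\<lambda>\<tau>. f_fun (r \<tau> (x2 \<tau> \<beta>) - l0 \<beta>)))) (at \<beta>)"
proof (intro ballI allI conjI)
  fix t \<alpha> \<beta> assume tD: "t \<in> Dom tstar"
  from sol obtain rt rx lt lx where
    crt: "continuous_on (Dom tstar \<times> UNIV) rt" and crx: "continuous_on (Dom tstar \<times> UNIV) rx"
    and clt: "continuous_on (Dom tstar \<times> UNIV) lt" and clx: "continuous_on (Dom tstar \<times> UNIV) lx"
    and pde: "\<forall>p \<in> Dom tstar \<times> UNIV.
           ((\<lambda>q. r (fst q) (snd q)) has_derivative (\<lambda>h. rt p * fst h + rx p * snd h))
              (at p within Dom tstar \<times> UNIV) \<and>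
           ((\<lambda>q. l (fst q) (snd q)) has_derivative (\<lambda>h. lt p * fst h + lx p * snd h))
              (at p within Dom tstar \<times> UNIV) \<and>
           rt p + k_fun (r (fst p) (snd p) - l (fst p) (snd p)) * rx p = 0 \<and>
           lt p - k_fun (r (fst p) (snd p) - l (fst p) (snd p)) * lx p = 0"
    and init: "\<forall>x. r 0 x = r0 x \<and> l 0 x = l0 x"
    unfolding solD_def by blast
  define S where "S = {0..t}"
  have t0: "0 \<le> t" using tD by (simp add: Dom_def)
  have SD: "S \<subseteq> Dom tstar"
  proof
    fix s assume "s \<in> S"
    then have "0 \<le> s" "ereal s \<le> ereal t" by (auto simp: S_def)
    moreover have "ereal t < tstar" using tD by (simp add: Dom_def)
    ultimately show "s \<in> Dom tstar" unfolding Dom_def using le_less_trans by blast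
  qed
  have SxD: "S \<times> UNIV \<subseteq> Dom tstar \<times> UNIV" using SD by auto
  have dr: "((\<lambda>q. r (fst q) (snd q)) has_derivative (\<lambda>h. rt p * fst h + rx p * snd h)) (at p within S \<times> UNIV)"
    if "p \<in> S \<times> UNIV" for p
    using pde that SxD by (blast intro: has_derivative_subset)
  have dl: "((\<lambda>q. l (fst q) (snd q)) has_derivative (\<lambda>h. lt p * fst h + lx p * snd h)) (at p within S \<times> UNIV)"
    if "p \<in> S \<times> UNIV" for p
    using pde that SxD by (blast intro: has_derivative_subset)
  have pr: "rt p + k_fun (r (fst p) (snd p) - l (fst p) (snd p)) * rx p = 0" if "p \<in> S \<times> UNIV" for p
    using pde that SxD by blast
  have pl: "lt p - k_fun (r (fst p) (snd p) - l (fst p) (snd p)) * lx p = 0" if "p \<in> S \<times> UNIV" for p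
    using pde that SxD by blast
  have clxS: "continuous_on (S \<times> UNIV) lx" by (rule continuous_on_subset[OF clx SxD])
  have crxS: "continuous_on (S \<times> UNIV) rx" by (rule continuous_on_subset[OF crx SxD])
  have dw: "(deriv w0 has_real_derivative deriv (deriv w0) x) (at x)" for x
    using w0_C2(2) DERIV_deriv_iff_real_differentiable by blast
  have dl0: "(l0 has_real_derivative deriv l0 x) (at x)" for x
  proof -
    have "(l0 has_real_derivative Q_fun (deriv w0 x) * deriv (deriv w0) x) (at x)"
      unfolding l0_def by (rule DERIV_chain2[OF L_deriv dw])
    then show ?thesis using DERIV_deriv_iff_real_differentiable real_differentiable_def by blast
  qed
  have dr0: "(r0 has_real_derivative deriv r0 x) (at x)" for x
  proof -
    have "(r0 has_real_derivative - (Q_fun (deriv w0 x) * deriv (deriv w0) x)) (at x)"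
      unfolding r0_def by (rule DERIV_minus[OF DERIV_chain2[OF L_deriv dw]])
    then show ?thesis using DERIV_deriv_iff_real_differentiable real_differentiable_def by blast
  qed
  have rl0: "r0 x - l0 x = 2 * r0 x" for x by (simp add: r0_def l0_def)
  have "((\<lambda>a. x1 t a) has_real_derivative
      sqrt (k_fun (r0 \<alpha> - l t (x1 t \<alpha>)) / k_fun (r0 \<alpha> - l0 \<alpha>)) *
      (1 + deriv r0 \<alpha> * sqrt (k_fun (r0 \<alpha> - l0 \<alpha>)) * integral {0..t} (\<lambda>\<tau>. f_fun (r0 \<alpha> - l \<tau> (x1 \<tau> \<alpha>))))) (at \<alpha>)"
  proof (rule core[where Rt=rt and Rx=rx and Lt=lt and Lx=lx and Ri=r0 and Li=l0])
    show "0 \<le> t" by (rule t0)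
    show "\<And>p. p \<in> {0..t} \<times> UNIV \<Longrightarrow> ((\<lambda>q. r (fst q) (snd q)) has_derivative (\<lambda>h. rt p * fst h + rx p * snd h)) (at p within {0..t} \<times> UNIV)"
      using dr by (simp add: S_def)
    show "\<And>p. p \<in> {0..t} \<times> UNIV \<Longrightarrow> ((\<lambda>q. l (fst q) (snd q)) has_derivative (\<lambda>h. lt p * fst h + lx p * snd h)) (at p within {0..t} \<times> UNIV)"
      using dl by (simp add: S_def)
    show "continuous_on ({0..t} \<times> UNIV) lx" using clxS by (simp add: S_def)
    show "\<And>p. p \<in> {0..t} \<times> UNIV \<Longrightarrow> rt p + k_fun (r (fst p) (snd p) - l (fst p) (snd p)) * rx p = 0"
      using pr by (simp add: S_def)
    show "\<And>p. p \<in> {0..t} \<times> UNIV \<Longrightarrow> lt p - k_fun (r (fst p) (snd p) - l (fst p) (snd p)) * lx p = 0"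
      using pl by (simp add: S_def)
    show "\<And>x. r 0 x = r0 x" "\<And>x. l 0 x = l0 x" using init by auto
    show "\<And>a. x1 0 a = a" using char1 by auto
    show "\<And>a s. s \<in> {0..t} \<Longrightarrow> ((\<lambda>\<tau>. x1 \<tau> a) has_real_derivative k_fun (r s (x1 s a) - l s (x1 s a))) (at s within {0..t})"
    proof -
      fix a s assume s: "s \<in> {0..t}"
      then have "s \<in> Dom tstar" using SD by (auto simp: S_def)
      then have "((\<lambda>\<tau>. x1 \<tau> a) has_real_derivative k_fun (r s (x1 s a) - l s (x1 s a))) (at s within Dom tstar)"
        using char1 by blast
      then show "((\<lambda>\<tau>. x1 \<tau> a) has_real_derivative k_fun (r s (x1 s a) - l s (x1 s a))) (at s within {0..t})"
        by (rule has_field_derivative_subset) (use SD in \<open>simp add: S_def\<close>)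
    qed
    show "(r0 has_real_derivative deriv r0 \<alpha>) (at \<alpha>)" by (rule dr0)
  qed
  then show "((\<lambda>a. x1 t a) has_real_derivative
        sqrt (k_fun (r0 \<alpha> - l t (x1 t \<alpha>)) / k_fun (2 * r0 \<alpha>)) *
        (1 + deriv r0 \<alpha> * sqrt (k_fun (2 * r0 \<alpha>)) *
             integral {0..t} (\<lambda>\<tau>. f_fun (r0 \<alpha> - l \<tau> (x1 \<tau> \<alpha>))))) (at \<alpha>)"
    by (simp only: rl0)
  \<comment> \<open>backward characteristics, by reflection\<close>
  show "((\<lambda>b. x2 t b) has_real_derivative
        sqrt (k_fun (r t (x2 t \<beta>) - l0 \<beta>) / k_fun (2 * r0 \<beta>)) *
        (1 + deriv l0 \<beta> * sqrt (k_fun (2 * r0 \<beta>)) *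
             integral {0..t} (\<lambda>\<tau>. f_fun (r \<tau> (x2 \<tau> \<beta>) - l0 \<beta>)))) (at \<beta>)"
  proof -
    define Rr where "Rr t x = l t (- x)" for t x :: real
    define Lr where "Lr t x = r t (- x)" for t x :: real
    define Xr where "Xr t a = - x2 t (- a)" for t a :: real
    define Rri where "Rri x = l0 (- x)" for x
    define Lri where "Lri x = r0 (- x)" for x
    define rf where "rf (p::real\<times>real) = (fst p, - snd p)" for p
    have rfS: "rf p \<in> S \<times> UNIV" if "p \<in> S \<times> UNIV" for p using that by (auto simp: rf_def)
    have keven: "k_fun (a - b) = k_fun (b - a)" for a b :: real using k_even[of "b - a"] by simp
    have V: "((\<lambda>a. Xr t a) has_real_derivative
      sqrt (k_fun (Rri (-\<beta>) - Lr t (Xr t (-\<beta>))) / k_fun (Rri (-\<beta>) - Lri (-\<beta>))) *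
      (1 + (- deriv l0 \<beta>) * sqrt (k_fun (Rri (-\<beta>) - Lri (-\<beta>))) * integral {0..t} (\<lambda>\<tau>. f_fun (Rri (-\<beta>) - Lr \<tau> (Xr \<tau> (-\<beta>)))))) (at (-\<beta>))"
    proof (rule core[where R=Rr and L=Lr and Rt="\<lambda>p. lt (rf p)" and Rx="\<lambda>p. - lx (rf p)"
          and Lt="\<lambda>p. rt (rf p)" and Lx="\<lambda>p. - rx (rf p)" and Ri=Rri and Li=Lri])
      show "0 \<le> t" by (rule t0)
      show "((\<lambda>q. Rr (fst q) (snd q)) has_derivative (\<lambda>h. lt (rf p) * fst h + - lx (rf p) * snd h)) (at p within {0..t} \<times> UNIV)"
        if "p \<in> {0..t} \<times> UNIV" for p
        unfolding Rr_def rf_def by (rule reflect_deriv[OF dl[unfolded S_def]]) (use that in auto)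
      show "((\<lambda>q. Lr (fst q) (snd q)) has_derivative (\<lambda>h. rt (rf p) * fst h + - rx (rf p) * snd h)) (at p within {0..t} \<times> UNIV)"
        if "p \<in> {0..t} \<times> UNIV" for p
        unfolding Lr_def rf_def by (rule reflect_deriv[OF dr[unfolded S_def]]) (use that in auto)
      show "continuous_on ({0..t} \<times> UNIV) (\<lambda>p. - rx (rf p))"
        unfolding rf_def
        by (intro continuous_intros continuous_on_compose2[OF crxS[unfolded S_def]]) (auto intro!: continuous_intros)
      show "lt (rf p) + k_fun (Rr (fst p) (snd p) - Lr (fst p) (snd p)) * - lx (rf p) = 0"
        if "p \<in> {0..t} \<times> UNIV" for p
        using pl[OF rfS, of p] that keven by (simp add: S_def rf_def Rr_def Lr_def)
      show "rt (rf p) - k_fun (Rr (fst p) (snd p) - Lr (fst p) (snd p)) * - rx (rf p) = 0"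
        if "p \<in> {0..t} \<times> UNIV" for p
        using pr[OF rfS, of p] that keven by (simp add: S_def rf_def Rr_def Lr_def)
      show "\<And>x. Rr 0 x = Rri x" "\<And>x. Lr 0 x = Lri x" using init by (auto simp: Rr_def Rri_def Lr_def Lri_def)
      show "\<And>a. Xr 0 a = a" using char2 by (auto simp: Xr_def)
      show "((\<lambda>\<tau>. Xr \<tau> a) has_real_derivative k_fun (Rr s (Xr s a) - Lr s (Xr s a))) (at s within {0..t})"
        if s: "s \<in> {0..t}" for a s
      proof -
        have "s \<in> Dom tstar" using SD s by (auto simp: S_def)
        then have "((\<lambda>\<tau>. x2 \<tau> (-a)) has_real_derivative - k_fun (r s (x2 s (-a)) - l s (x2 s (-a)))) (at s within Dom tstar)"
          using char2 by blast
        then have "((\<lambda>\<tau>. x2 \<tau> (-a)) has_real_derivative - k_fun (r s (x2 s (-a)) - l s (x2 s (-a)))) (at s within {0..t})"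
          by (rule has_field_derivative_subset) (use SD in \<open>simp add: S_def\<close>)
        then have "((\<lambda>\<tau>. - x2 \<tau> (-a)) has_real_derivative - (- k_fun (r s (x2 s (-a)) - l s (x2 s (-a))))) (at s within {0..t})"
          by (rule DERIV_minus)
        then show ?thesis using keven by (simp add: Xr_def Rr_def Lr_def)
      qed
      show "(Rri has_real_derivative - deriv l0 \<beta>) (at (- \<beta>))"
      proof -
        have "((\<lambda>x. l0 (- x)) has_real_derivative deriv l0 (- (- \<beta>)) * (- 1)) (at (- \<beta>))"
          by (rule DERIV_chain2[OF dl0]) (auto intro!: derivative_eq_intros)
        then show ?thesis by (simp add: Rri_def[abs_def])
      qed
    qed
    have "((\<lambda>b. - Xr t (- b)) has_real_derivative - (sqrt (k_fun (Rri (-\<beta>) - Lr t (Xr t (-\<beta>))) / k_fun (Rri (-\<beta>) - Lri (-\<beta>))) *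
      (1 + (- deriv l0 \<beta>) * sqrt (k_fun (Rri (-\<beta>) - Lri (-\<beta>))) * integral {0..t} (\<lambda>\<tau>. f_fun (Rri (-\<beta>) - Lr \<tau> (Xr \<tau> (-\<beta>))))) * (- 1))) (at \<beta>)"
    proof -
      have dneg: "((\<lambda>b::real. - b) has_real_derivative - 1) (at \<beta>)" by (auto intro!: derivative_eq_intros)
      show ?thesis by (rule DERIV_minus[OF DERIV_chain2[where g="\<lambda>b. - b", OF V dneg]])
    qed
    moreover have "(\<lambda>b. - Xr t (- b)) = (\<lambda>b. x2 t b)" by (simp add: Xr_def)
    moreover have "k_fun (Rri (-\<beta>) - Lr t (Xr t (-\<beta>))) = k_fun (r t (x2 t \<beta>) - l0 \<beta>)"
      using keven by (simp add: Rri_def Lr_def Xr_def)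
    moreover have "k_fun (Rri (-\<beta>) - Lri (-\<beta>)) = k_fun (2 * r0 \<beta>)"
      using keven[of "l0 \<beta>" "r0 \<beta>"] rl0[of \<beta>] by (simp add: Rri_def Lri_def)
    moreover have "(\<lambda>\<tau>. f_fun (Rri (-\<beta>) - Lr \<tau> (Xr \<tau> (-\<beta>)))) = (\<lambda>\<tau>. - f_fun (r \<tau> (x2 \<tau> \<beta>) - l0 \<beta>))"
      using f_odd by (auto simp: Rri_def Lr_def Xr_def intro!: ext) (metis f_odd minus_diff_eq)
    ultimately show ?thesis by simp
  qed
qed


end
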